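(* Let $\mathbb{F}_q$ be the finite field with $q$ elements and characteristic $p$, let $m$ be a positive integer dividing $q-1$, let $H\subseteq\mathbb{F}_q^*$ be the multiplicative subgroup of index $m$, and let $k$ be an integer with $1\le k\le (q-1)/m$. Let $M_H(k,0)$ be the number of $k$-element subsets $S\subseteq H$ with $\sum_{a\in S}a=0$. Then $$\left|M_H(k,0)-\frac1q\binom{(q-1)/m}{k}\right|\le\binom{\sqrt q+k-1+\frac{q}{mp}}{k}.$$
   Context: For a real number $t$ and a nonnegative integer $k$, $\binom{t}{k}=\frac{t(t-1)\cdots(t-k+1)}{k!}$. *)

theory Defs
  imports Complex_Main "HOL-Library.Cardinality"
begin

definition subset_sum_count :: "'a::comm_monoid_add set \<Rightarrow> nat \<Rightarrow> 'a \<Rightarrow> nat" where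
  "subset_sum_count H k b = card {S. S \<subseteq> H \<and> card S = k \<and> (\<Sum>a\<in>S. a) = b}"

end

theory Submission
  imports Defs "HOL-Computational_Algebra.Formal_Power_Series" "HOL-Computational_Algebra.Primes" "HOL-Number_Theory.Cong"
begin
unbundle fps_syntax


definition addsub :: "'a::field set \<Rightarrow> bool" where
  "addsub V \<longleftrightarrow> 0 \<in> V \<and> (\<forall>x\<in>V. \<forall>y\<in>V. x + y \<in> V)"

lemma addsub_of_nat_mult:
  assumes "addsub V" "v \<in> V" shows "of_nat i * v \<in> V"
  using assms by (induction i) (auto simp: addsub_def algebra_simps)

lemma char_pos: "CHAR('a::{field,finite}) > 0"
  by (simp add: finite_imp_CHAR_pos)

lemma char_prime: "prime CHAR('a::{field,finite})"
  by (simp add: finite_imp_CHAR_pos prime_CHAR_semidom)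

lemma neg_of_nat_CHAR: "- (x::'a::{field,finite}) = of_nat (CHAR('a) - 1) * x"
proof -
  have "of_nat (CHAR('a) - 1) * x + x = of_nat (CHAR('a) - 1 + 1) * x"
    by (simp add: algebra_simps)
  also have "CHAR('a) - 1 + 1 = CHAR('a)" using char_pos[where 'a='a] by simp
  finally have z: "of_nat (CHAR('a) - 1) * x + x = 0" by simp
  have "- x = - x + (of_nat (CHAR('a) - 1) * x + x)" unfolding z by simp
  also have "\<dots> = of_nat (CHAR('a) - 1) * x" by (simp add: algebra_simps)
  finally show ?thesis .
qed

lemma addsub_neg:
  assumes "addsub V" "(v::'a::{field,finite}) \<in> V" shows "- v \<in> V"
  by (subst neg_of_nat_CHAR) (rule addsub_of_nat_mult[OF assms])

lemma prime_field_inv: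
  assumes "of_nat j \<noteq> (0::'a::{field,finite})"
  shows "\<exists>j'. of_nat j' * of_nat j = (1::'a)"
proof -
  have nd: "\<not> CHAR('a) dvd j" using assms by (simp add: of_nat_eq_0_iff_char_dvd)
  hence "j \<noteq> 0" by (metis dvd_0_right)
  have "coprime j CHAR('a)" using prime_imp_coprime[OF char_prime nd]
    by (simp add: coprime_commute)
  hence g: "gcd j CHAR('a) = 1" by simp
  obtain x y where "j * x = CHAR('a) * y + gcd j CHAR('a)" using bezout_nat[OF \<open>j \<noteq> 0\<close>] by blast
  hence "j * x = CHAR('a) * y + 1" using g by simp
  hence "(of_nat (j * x) :: 'a) = of_nat (CHAR('a) * y + 1)" by simp
  hence "(of_nat x * of_nat j :: 'a) = 1" by (simp add: mult.commute)
  thus ?thesis by blast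
qed

lemma exists_add_char:
  "\<exists>\<psi>::'a::{field,finite} \<Rightarrow> complex. (\<forall>x y. \<psi> (x + y) = \<psi> x * \<psi> y) \<and> (\<forall>x. norm (\<psi> x) = 1) \<and> \<psi> 1 \<noteq> 1"
proof -
  define p where "p = CHAR('a)"
  have p2: "p \<ge> 2" using char_prime[where 'a='a] unfolding p_def by (simp add: prime_ge_2_nat)
  define P where "P = (\<lambda>V::'a set. addsub V \<and> (1::'a) \<notin> V)"
  have P0: "P {0}" by (simp add: P_def addsub_def)
  have "\<forall>V. P V \<longrightarrow> card V < Suc (CARD('a))"
    by (simp add: card_mono le_imp_less_Suc)
  then obtain V where PV: "P V" and maxV: "\<And>W. P W \<Longrightarrow> card W \<le> card V"
    using ex_has_greatest_nat[of P "{0}" card, OF P0] by blast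
  have aV: "addsub V" and nV: "1 \<notin> V" using PV by (auto simp: P_def)
  have decomp: "\<exists>v\<in>V. \<exists>j. x = v + of_nat j" for x
  proof (rule ccontr)
    assume nx: "\<not> (\<exists>v\<in>V. \<exists>j. x = v + of_nat j)"
    define W where "W = {v + of_nat j * x | v j. v \<in> V}"
    have aW: "addsub W"
      unfolding addsub_def W_def
    proof safe
      show "\<exists>v j. (0::'a) = v + of_nat j * x \<and> v \<in> V"
        using aV by (intro exI[of _ 0] exI[of _ 0]) (auto simp: addsub_def)
    next
      fix v j v' j' assume "v \<in> V" "v' \<in> V"
      then show "\<exists>va ja. v + of_nat j * x + (v' + of_nat j' * x) = va + of_nat ja * x \<and> va \<in> V"
        using aV by (intro exI[of _ "v + v'"] exI[of _ "j + j'"]) (auto simp: addsub_def algebra_simps)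
    qed
    have n1W: "1 \<notin> W"
    proof
      assume "1 \<in> W"
      then obtain v j where v: "v \<in> V" and e: "1 = v + of_nat j * x" unfolding W_def by blast
      show False
      proof (cases "of_nat j = (0::'a)")
        case True thus False using e v nV by simp
      next
        case False
        then obtain j' where j': "of_nat j' * of_nat j = (1::'a)" using prime_field_inv by blast
        have "of_nat j' = of_nat j' * v + (of_nat j' * of_nat j) * x"
          using e by (metis distrib_left mult.assoc mult.right_neutral)
        hence e2: "of_nat j' = of_nat j' * v + x" using j' by simp
        have "x = - (of_nat j' * v) + of_nat j'" by (metis e2 add_diff_cancel_left' diff_conv_add_uminus add.commute)
        moreover have "- (of_nat j' * v) \<in> V" using addsub_neg[OF aV addsub_of_nat_mult[OF aV v]] .
        ultimately show False using nx by blast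
      qed
    qed
    have "V \<subset> W"
    proof
      show "V \<subseteq> W"
      proof
        fix v assume "v \<in> V"
        then show "v \<in> W" unfolding W_def by (intro CollectI exI[of _ v] exI[of _ 0]) simp
      qed
      have "x \<in> W" unfolding W_def using aV
        by (intro CollectI exI[of _ 0] exI[of _ 1]) (auto simp: addsub_def)
      moreover have "x \<notin> V" using nx by (metis add.right_neutral of_nat_0)
      ultimately show "V \<noteq> W" by blast
    qed
    hence "card V < card W" by (simp add: psubset_card_mono)
    moreover have "card W \<le> card V" using maxV aW n1W by (simp add: P_def)
    ultimately show False by simp
  qed
  have uniq: "of_nat j = (of_nat j' :: 'a)" if "v \<in> V" "v' \<in> V" "v + of_nat j = v' + of_nat j'" for v v' j j'
  proof (rule ccontr)
    assume ne: "of_nat j \<noteq> (of_nat j' :: 'a)"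
    have w: "(of_nat j - of_nat j' :: 'a) = v' + - v" using that(3) by (simp add: algebra_simps)
    have nv: "- v \<in> V" using addsub_neg[OF aV that(1)] .
    have "v' + - v \<in> V" using aV nv that(2) unfolding addsub_def by blast
    hence wV: "(of_nat j - of_nat j' :: 'a) \<in> V" unfolding w .
    have "(of_nat j - of_nat j' :: 'a) = of_nat j + of_nat (CHAR('a) - 1) * of_nat j'"
      using neg_of_nat_CHAR[of "of_nat j' :: 'a"] by (metis diff_conv_add_uminus)
    also have "\<dots> = of_nat (j + (CHAR('a) - 1) * j')" by simp
    finally have we: "(of_nat j - of_nat j' :: 'a) = of_nat (j + (CHAR('a) - 1) * j')" .
    have "of_nat (j + (CHAR('a) - 1) * j') \<noteq> (0::'a)" using ne we by (metis right_minus_eq)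
    then obtain i where "of_nat i * of_nat (j + (CHAR('a) - 1) * j') = (1::'a)"
      using prime_field_inv by blast
    moreover have "of_nat i * of_nat (j + (CHAR('a) - 1) * j') \<in> V"
      using addsub_of_nat_mult[OF aV wV[unfolded we]] .
    ultimately show False using nV by simp
  qed
  define \<omega> where "\<omega> = cis (2 * pi / p)"
  have \<omega>p: "\<omega> ^ p = 1" unfolding \<omega>_def DeMoivre using p2 by simp
  have \<omega>mod: "\<omega> ^ j = \<omega> ^ (j mod p)" for j
  proof -
    have "\<omega> ^ j = \<omega> ^ (p * (j div p) + j mod p)" by simp
    also have "\<dots> = \<omega> ^ (j mod p)" by (simp only: power_add power_mult \<omega>p power_one mult_1)
    finally show ?thesis .
  qed
  have \<omega>eq: "\<omega> ^ j = \<omega> ^ j'" if "of_nat j = (of_nat j' :: 'a)" for j j'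
  proof -
    have "j mod p = j' mod p" using that unfolding p_def by (simp add: of_nat_eq_iff_cong_CHAR cong_def)
    thus ?thesis using \<omega>mod by metis
  qed
  define \<psi> where "\<psi> x = \<omega> ^ (SOME j. \<exists>v\<in>V. x = v + of_nat j)" for x
  have \<psi>rep: "\<psi> (v + of_nat j) = \<omega> ^ j" if "v \<in> V" for v j
  proof -
    have "\<exists>j'. \<exists>v'\<in>V. v + of_nat j = v' + of_nat j'" using that by blast
    from someI_ex[OF this] obtain v' where "v' \<in> V"
      "v + of_nat j = v' + of_nat (SOME j'. \<exists>v'\<in>V. v + of_nat j = v' + of_nat j')" by blast
    hence "of_nat j = (of_nat (SOME j'. \<exists>v'\<in>V. v + of_nat j = v' + of_nat j') :: 'a)"
      using uniq that by blast
    thus ?thesis unfolding \<psi>_def using \<omega>eq by metis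
  qed
  have hom: "\<psi> (x + y) = \<psi> x * \<psi> y" for x y
  proof -
    obtain v j where v: "v \<in> V" "x = v + of_nat j" using decomp by blast
    obtain v' j' where v': "v' \<in> V" "y = v' + of_nat j'" using decomp by blast
    have "x + y = (v + v') + of_nat (j + j')" using v v' by (simp add: algebra_simps)
    moreover have "v + v' \<in> V" using aV v v' by (simp add: addsub_def)
    ultimately have "\<psi> (x + y) = \<omega> ^ (j + j')" using \<psi>rep by metis
    also have "\<dots> = \<psi> x * \<psi> y" using \<psi>rep v v' by (simp add: power_add)
    finally show ?thesis .
  qed
  have nrm: "norm (\<psi> x) = 1" for x
    unfolding \<psi>_def \<omega>_def by (simp add: norm_power)
  have "\<psi> 1 = \<omega>" using \<psi>rep[of 0 1] aV by (simp add: addsub_def)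
  moreover have "\<omega> \<noteq> 1"
  proof
    assume "\<omega> = 1"
    hence "cos (2 * pi / p) = 1" unfolding \<omega>_def by (metis cis.sel(1) one_complex.sel(1))
    then obtain n :: int where n: "2 * pi / p = real_of_int n * 2 * pi" using cos_one_2pi_int[THEN iffD1] by blast
    hence "(2 * pi) * (1 / real p) = (2 * pi) * real_of_int n" by simp
    hence "1 / real p = real_of_int n" using pi_gt_zero by (metis mult_cancel_left pi_neq_zero mult_eq_0_iff zero_neq_numeral)
    moreover have "0 < 1 / real p" "1 / real p < 1" using p2 by auto
    ultimately have "0 < real_of_int n" "real_of_int n < 1" by simp_all
    hence "0 < n" "n < 1" by simp_all
    thus False by simp
  qed
  ultimately have "\<psi> 1 \<noteq> 1" by simp
  thus ?thesis using hom nrm by (intro exI[of _ \<psi>]) simp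
qed




definition esym :: "('b \<Rightarrow> complex) \<Rightarrow> 'b set \<Rightarrow> nat \<Rightarrow> complex" where
  "esym x A j = (\<Sum>S\<in>{S. S \<subseteq> A \<and> card S = j}. \<Prod>a\<in>S. x a)"

definition psum :: "('b \<Rightarrow> complex) \<Rightarrow> 'b set \<Rightarrow> nat \<Rightarrow> complex" where
  "psum x A j = (\<Sum>a\<in>A. x a ^ j)"

definition EP :: "('b \<Rightarrow> complex) \<Rightarrow> 'b set \<Rightarrow> complex fps" where
  "EP x A = (\<Prod>a\<in>A. fps_const (x a) * fps_X + 1)"

definition DP :: "('b \<Rightarrow> complex) \<Rightarrow> 'b set \<Rightarrow> complex fps" where
  "DP x A = Abs_fps (\<lambda>j. \<Sum>a\<in>A. x a * (- x a) ^ j)"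

lemma fps_const_prod': "(\<Prod>a\<in>B. fps_const (f a)) = fps_const (\<Prod>a\<in>B. f a)"
  by (induction B rule: infinite_finite_induct) simp_all

lemma EP_nth:
  assumes "finite A" shows "EP x A $ j = esym x A j"
proof -
  have "EP x A = (\<Sum>B\<in>Pow A. (\<Prod>a\<in>B. fps_const (x a) * fps_X) * (\<Prod>a\<in>A-B. 1))"
    unfolding EP_def using assms by (rule prod_add)
  also have "\<dots> = (\<Sum>B\<in>Pow A. fps_const (\<Prod>a\<in>B. x a) * fps_X ^ card B)"
    by (intro sum.cong refl) (simp add: prod.distrib fps_const_prod')
  finally have "EP x A $ j = (\<Sum>B\<in>Pow A. (fps_const (\<Prod>a\<in>B. x a) * fps_X ^ card B) $ j)"
    by (simp add: fps_sum_nth)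
  also have "\<dots> = (\<Sum>B\<in>Pow A. if card B = j then (\<Prod>a\<in>B. x a) else 0)"
    by (intro sum.cong refl) (auto simp: fps_X_power_nth)
  also have "\<dots> = (\<Sum>B\<in>{B\<in>Pow A. card B = j}. (\<Prod>a\<in>B. x a))"
    using assms by (intro sum.inter_filter[symmetric]) simp
  also have "{B\<in>Pow A. card B = j} = {S. S \<subseteq> A \<and> card S = j}" by auto
  finally show ?thesis unfolding esym_def .
qed

lemma esym_0: "finite A \<Longrightarrow> esym x A 0 = 1"
proof -
  assume "finite A"
  have "S = {}" if "S \<subseteq> A" "card S = 0" for S
    using finite_subset[OF that(1) \<open>finite A\<close>] that(2) by simp
  hence "{S. S \<subseteq> A \<and> card S = 0} = {{}}" by auto
  thus ?thesis by (simp add: esym_def)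
qed

lemma EP_deriv:
  assumes "finite A" shows "fps_deriv (EP x A) = EP x A * DP x A"
  using assms
proof (induction A rule: finite_induct)
  case empty
  have "DP x {} = 0" by (simp add: DP_def fps_eq_iff)
  thus ?case by (simp add: EP_def)
next
  case (insert y A)
  define C where "C = fps_const (x y)"
  define d where "d = Abs_fps (\<lambda>j. x y * (- x y) ^ j)"
  have EPi: "EP x (insert y A) = (C * fps_X + 1) * EP x A"
    using insert by (simp add: EP_def C_def)
  have DPi: "DP x (insert y A) = DP x A + d"
    using insert by (simp add: DP_def d_def fps_eq_iff)
  have key: "(C * fps_X + 1) * d = C"
  proof (rule fps_ext)
    fix n
    show "((C * fps_X + 1) * d) $ n = C $ n"
      by (cases n) (simp_all add: C_def d_def distrib_right mult.assoc)
  qed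
  have dC: "fps_deriv (C * fps_X + 1) = C" by (simp add: C_def)
  have "fps_deriv (EP x (insert y A)) = C * EP x A + (C * fps_X + 1) * (EP x A * DP x A)"
    unfolding EPi fps_deriv_mult dC insert.IH by (simp only: add.commute)
  also have "\<dots> = EP x A * ((C * fps_X + 1) * d) + (C * fps_X + 1) * EP x A * DP x A"
    unfolding key by algebra
  also have "\<dots> = EP x (insert y A) * DP x (insert y A)"
    unfolding EPi DPi by algebra
  finally show ?case .
qed

lemma DP_nth: "DP x A $ j = (-1) ^ j * psum x A (Suc j)"
proof -
  have "DP x A $ j = (\<Sum>a\<in>A. x a * (- x a) ^ j)" by (simp add: DP_def)
  also have "\<dots> = (\<Sum>a\<in>A. (-1) ^ j * x a ^ Suc j)"
    by (intro sum.cong refl) (subst power_minus, simp add: mult_ac)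
  also have "\<dots> = (-1) ^ j * psum x A (Suc j)" by (simp add: psum_def sum_distrib_left)
  finally show ?thesis .
qed

lemma newton_bound:
  assumes "finite A"
  shows "norm (of_nat k * esym x A k) \<le> (\<Sum>i<k. norm (esym x A i) * norm (psum x A (k - i)))"
proof (cases k)
  case 0 thus ?thesis by simp
next
  case (Suc m)
  have "of_nat k * esym x A k = fps_deriv (EP x A) $ m"
    using Suc assms by (simp add: EP_nth)
  also have "\<dots> = (EP x A * DP x A) $ m"
    using assms by (simp only: EP_deriv)
  also have "\<dots> = (\<Sum>i=0..m. EP x A $ i * DP x A $ (m - i))"
    by (rule fps_mult_nth)
  also have "\<dots> = (\<Sum>i<k. EP x A $ i * DP x A $ (m - i))"
    using Suc by (simp only: atLeast0AtMost lessThan_Suc_atMost)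
  also have "\<dots> = (\<Sum>i<k. esym x A i * ((-1) ^ (m - i) * psum x A (k - i)))"
  proof (intro sum.cong refl)
    fix i assume "i \<in> {..<k}"
    hence "k - i = Suc (m - i)" using Suc by auto
    thus "EP x A $ i * DP x A $ (m - i) = esym x A i * ((-1) ^ (m - i) * psum x A (k - i))"
      using assms by (simp only: EP_nth DP_nth)
  qed
  finally have eq: "of_nat k * esym x A k = (\<Sum>i<k. esym x A i * ((-1) ^ (m - i) * psum x A (k - i)))" .
  have "norm (of_nat k * esym x A k) \<le> (\<Sum>i<k. norm (esym x A i * ((-1) ^ (m - i) * psum x A (k - i))))"
    unfolding eq by (rule norm_sum)
  also have "\<dots> = (\<Sum>i<k. norm (esym x A i) * norm (psum x A (k - i)))"
    by (simp add: norm_mult norm_power)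
  finally show ?thesis .
qed

lemma esym_bound:
  fixes F U :: "nat \<Rightarrow> real"
  assumes fin: "finite A" and F0: "1 \<le> F 0"
    and PU: "\<And>j. j \<ge> 1 \<Longrightarrow> norm (psum x A j) \<le> U j"
    and FU: "\<And>k. k \<ge> 1 \<Longrightarrow> (\<Sum>i<k. F i * U (k - i)) \<le> of_nat k * F k"
  shows "norm (esym x A k) \<le> F k"
proof (induction k rule: less_induct)
  case (less k)
  show ?case
  proof (cases k)
    case 0 thus ?thesis using F0 fin by (simp add: esym_0)
  next
    case (Suc m)
    have "of_nat k * norm (esym x A k) = norm (of_nat k * esym x A k)"
      by (simp add: norm_mult)
    also have "\<dots> \<le> (\<Sum>i<k. norm (esym x A i) * norm (psum x A (k - i)))"
      using newton_bound[OF fin] .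
    also have "\<dots> \<le> (\<Sum>i<k. F i * U (k - i))"
    proof (rule sum_mono)
      fix i assume i: "i \<in> {..<k}"
      have "norm (esym x A i) \<le> F i" using less i by simp
      moreover have "norm (psum x A (k - i)) \<le> U (k - i)" using PU i by simp
      ultimately show "norm (esym x A i) * norm (psum x A (k - i)) \<le> F i * U (k - i)"
        by (meson mult_mono norm_ge_zero order_trans)
    qed
    also have "\<dots> \<le> of_nat k * F k" by (rule FU) (simp add: Suc)
    finally have ineq: "of_nat k * norm (esym x A k) \<le> of_nat k * F k" .
    have pos: "(0::real) < of_nat k" using Suc by simp
    show ?thesis using mult_le_cancel_left_pos[OF pos, THEN iffD1, OF ineq] .
  qed
qed



lemma sum_split_lt:
  fixes g :: "nat \<Rightarrow> 'b::comm_monoid_add"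
  assumes "m \<le> n" shows "sum g {..<n} = sum g {..<m} + sum g {m..<n}"
proof -
  have "{..<n} = {..<m} \<union> {m..<n}" using ivl_disj_un_one(2)[OF assms] by simp
  moreover have "{..<m} \<inter> {m..<n} = {}" by auto
  ultimately show ?thesis by (simp add: sum.union_disjoint)
qed

lemma block_ineq:
  fixes F :: "nat \<Rightarrow> real"
  assumes mono: "\<And>i. F i \<le> F (Suc i)" and nn: "\<And>i. 0 \<le> F i" and p: "p \<ge> 1"
  shows "of_nat p * (\<Sum>i<k. if p dvd (k - i) then F i else 0) \<le> (\<Sum>i<k. F i)"
proof (induction k rule: less_induct)
  case (less k)
  show ?case
  proof (cases "k < p")
    case True
    have "(\<Sum>i<k. if p dvd (k - i) then F i else 0) = 0"
    proof (intro sum.neutral ballI)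
      fix i assume "i \<in> {..<k}"
      hence "0 < k - i" "k - i < p" using True by auto
      hence "\<not> p dvd (k - i)" by (auto dest: dvd_imp_le)
      thus "(if p dvd (k - i) then F i else 0) = 0" by simp
    qed
    thus ?thesis using nn by (simp add: sum_nonneg)
  next
    case False
    define k' where "k' = k - p"
    have kk: "k = k' + p" using False k'_def by simp
    have kle: "k' \<le> k" using kk by simp
    have kl: "k' < k" using kk p by simp
    have IH: "of_nat p * (\<Sum>i<k'. if p dvd (k' - i) then F i else 0) \<le> (\<Sum>i<k'. F i)"
      using less kl by blast
    have A: "(\<Sum>i<k'. if p dvd (k - i) then F i else 0) = (\<Sum>i<k'. if p dvd (k' - i) then F i else 0)"
    proof (intro sum.cong refl)
      fix i assume "i \<in> {..<k'}"
      hence "k - i = (k' - i) + p" using kk by auto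
      thus "(if p dvd (k - i) then F i else 0) = (if p dvd (k' - i) then F i else 0)" by simp
    qed
    have B: "(\<Sum>i\<in>{k'..<k}. if p dvd (k - i) then F i else 0) = F k'"
    proof -
      have "(\<Sum>i\<in>{k'..<k}. if p dvd (k - i) then F i else 0) = (\<Sum>i\<in>{k'..<k}. if i = k' then F i else 0)"
      proof (intro sum.cong refl)
        fix i assume i: "i \<in> {k'..<k}"
        have "p dvd (k - i) \<longleftrightarrow> i = k'"
        proof
          assume "p dvd (k - i)"
          moreover have "0 < k - i" using i by auto
          ultimately have "p \<le> k - i" by (simp add: dvd_imp_le)
          thus "i = k'" using i kk by auto
        next
          assume "i = k'" thus "p dvd (k - i)" using kk by simp
        qed
        thus "(if p dvd (k - i) then F i else 0) = (if i = k' then F i else 0)" by simp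
      qed
      also have "\<dots> = F k'" using kl by (simp add: sum.delta')
      finally show ?thesis .
    qed
    have C: "of_nat p * F k' \<le> (\<Sum>i\<in>{k'..<k}. F i)"
    proof -
      have s1: "(\<Sum>i\<in>{k'..<k}. F k') \<le> (\<Sum>i\<in>{k'..<k}. F i)"
        by (intro sum_mono) (auto intro: lift_Suc_mono_le[of F, OF mono])
      have "k - k' = p" using kk by simp
      hence s2: "(\<Sum>i\<in>{k'..<k}. F k') = of_nat p * F k'" by simp
      show ?thesis using s1 s2 by linarith
    qed
    have "of_nat p * (\<Sum>i<k. if p dvd (k - i) then F i else 0)
        = of_nat p * (\<Sum>i<k'. if p dvd (k' - i) then F i else 0) + of_nat p * F k'"
      using sum_split_lt[OF kle, of "\<lambda>i. if p dvd (k - i) then F i else 0"] A B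
      by (simp add: distrib_left)
    also have "\<dots> \<le> (\<Sum>i<k'. F i) + (\<Sum>i\<in>{k'..<k}. F i)" using IH C by simp
    also have "\<dots> = (\<Sum>i<k. F i)" using sum_split_lt[OF kle, of F] by simp
    finally show ?thesis .
  qed
qed

definition Fc :: "real \<Rightarrow> nat \<Rightarrow> real" where
  "Fc c k = pochhammer c k / fact k"

lemma Fc_0 [simp]: "Fc c 0 = 1" by (simp add: Fc_def)

lemma Fc_nonneg: "c > 0 \<Longrightarrow> 0 \<le> Fc c k"
  by (simp add: Fc_def pochhammer_nonneg)

lemma Fc_Suc: "Fc c (Suc k) = Fc c k * (c + of_nat k) / (of_nat k + 1)"
  by (simp add: Fc_def pochhammer_Suc fact_Suc field_simps)

lemma Fc_mono:
  assumes "c \<ge> 1" shows "Fc c k \<le> Fc c (Suc k)"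
proof -
  have nn: "0 \<le> Fc c k" using assms by (simp add: Fc_nonneg)
  have "1 \<le> (c + of_nat k) / (of_nat k + 1)" using assms by (simp add: field_simps)
  hence "Fc c k * 1 \<le> Fc c k * ((c + of_nat k) / (of_nat k + 1))"
    using nn by (intro mult_left_mono) auto
  thus ?thesis by (simp add: Fc_Suc)
qed

lemma Fc_rec: "of_nat k * Fc c k = c * (\<Sum>i<k. Fc c i)"
proof (induction k)
  case 0 thus ?case by simp
next
  case (Suc k)
  have "of_nat (Suc k) * Fc c (Suc k) = Fc c k * (c + of_nat k)"
    by (simp add: Fc_Suc field_simps)
  also have "\<dots> = c * Fc c k + of_nat k * Fc c k" by (simp add: algebra_simps)
  also have "\<dots> = c * (\<Sum>i<Suc k. Fc c i)" using Suc by (simp add: algebra_simps)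
  finally show ?case .
qed

lemma Fc_gchoose: "Fc c k = (c + of_nat k - 1) gchoose k"
  by (simp add: Fc_def gbinomial_pochhammer')

lemma FU_ineq:
  fixes s t :: real and p :: nat
  assumes s: "s \<ge> 0" and t: "t \<ge> 0" and p: "p \<ge> 1" and c: "c = s + t / of_nat p" and c1: "c \<ge> 1"
  shows "(\<Sum>i<k. Fc c i * (s + t * (if p dvd (k - i) then 1 else 0))) \<le> of_nat k * Fc c k"
proof -
  define G where "G = (\<Sum>i<k. if p dvd (k - i) then Fc c i else 0)"
  have "(\<Sum>i<k. Fc c i * (s + t * (if p dvd (k - i) then 1 else 0)))
      = (\<Sum>i<k. s * Fc c i + t * (if p dvd (k - i) then Fc c i else 0))"
    by (intro sum.cong refl) (simp add: algebra_simps)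
  also have "\<dots> = s * (\<Sum>i<k. Fc c i) + t * G"
    by (simp add: sum.distrib sum_distrib_left G_def)
  also have "\<dots> \<le> s * (\<Sum>i<k. Fc c i) + t * ((\<Sum>i<k. Fc c i) / of_nat p)"
  proof -
    have "of_nat p * G \<le> (\<Sum>i<k. Fc c i)" unfolding G_def
      by (rule block_ineq) (use c1 p in \<open>auto intro: Fc_mono Fc_nonneg\<close>)
    hence "G \<le> (\<Sum>i<k. Fc c i) / of_nat p" using p by (simp add: field_simps)
    hence "t * G \<le> t * ((\<Sum>i<k. Fc c i) / of_nat p)" by (rule mult_left_mono[OF _ t])
    thus ?thesis by simp
  qed
  also have "\<dots> = c * (\<Sum>i<k. Fc c i)" using c by (simp add: algebra_simps)
  also have "\<dots> = of_nat k * Fc c k" by (simp add: Fc_rec)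
  finally show ?thesis .
qed

lemma gchoose_mono:
  fixes x y :: real
  assumes "of_nat k - 1 \<le> x" "x \<le> y"
  shows "x gchoose k \<le> y gchoose k"
proof -
  have "pochhammer (x - of_nat k + 1) k \<le> pochhammer (y - of_nat k + 1) k"
    unfolding pochhammer_prod
    by (intro prod_mono) (use assms in auto)
  thus ?thesis by (simp add: gbinomial_pochhammer' divide_right_mono)
qed



lemma psi0:
  fixes \<psi> :: "'a::{field,finite} \<Rightarrow> complex"
  assumes hom: "\<And>x y. \<psi> (x + y) = \<psi> x * \<psi> y" and nrm: "\<And>x. norm (\<psi> x) = 1"
  shows "\<psi> 0 = 1"
proof -
  have "\<psi> 0 = \<psi> 0 * \<psi> 0" using hom[of 0 0] by simp
  moreover have "\<psi> 0 \<noteq> 0" using nrm[of 0] by auto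
  ultimately show ?thesis by (metis mult_cancel_right1 mult.commute)
qed

lemma psi_sum:
  fixes \<psi> :: "'a::{field,finite} \<Rightarrow> complex"
  assumes hom: "\<And>x y. \<psi> (x + y) = \<psi> x * \<psi> y" and nrm: "\<And>x. norm (\<psi> x) = 1"
    and fin: "finite S"
  shows "\<psi> (\<Sum>a\<in>S. f a) = (\<Prod>a\<in>S. \<psi> (f a))"
proof -
  show ?thesis using fin
    by (induction S rule: finite_induct) (simp_all add: psi0[OF hom nrm] hom)
qed

lemma psi_pow:
  fixes \<psi> :: "'a::{field,finite} \<Rightarrow> complex"
  assumes hom: "\<And>x y. \<psi> (x + y) = \<psi> x * \<psi> y" and nrm: "\<And>x. norm (\<psi> x) = 1"
  shows "\<psi> x ^ j = \<psi> (of_nat j * x)"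
proof (induction j)
  case 0 thus ?case by (simp add: psi0[OF hom nrm])
next
  case (Suc j)
  have "\<psi> (of_nat (Suc j) * x) = \<psi> (x + of_nat j * x)" by (simp add: algebra_simps)
  thus ?case using Suc hom by simp
qed

lemma psi_cnj:
  fixes \<psi> :: "'a::{field,finite} \<Rightarrow> complex"
  assumes hom: "\<And>x y. \<psi> (x + y) = \<psi> x * \<psi> y" and nrm: "\<And>x. norm (\<psi> x) = 1"
  shows "cnj (\<psi> x) = \<psi> (- x)"
proof -
  have a: "\<psi> x * \<psi> (- x) = 1" using hom[of x "-x"] psi0[OF hom nrm] by simp
  have b: "cnj (\<psi> x) * \<psi> x = 1"
    using complex_norm_square[of "\<psi> x"] nrm[of x] by (simp add: mult.commute)
  have "cnj (\<psi> x) = cnj (\<psi> x) * (\<psi> x * \<psi> (- x))" using a by simp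
  also have "\<dots> = (cnj (\<psi> x) * \<psi> x) * \<psi> (- x)" by (simp add: mult.assoc)
  also have "\<dots> = \<psi> (- x)" using b by simp
  finally show ?thesis .
qed

lemma sum_psi_zero:
  fixes \<psi> :: "'a::{field,finite} \<Rightarrow> complex"
  assumes hom: "\<And>x y. \<psi> (x + y) = \<psi> x * \<psi> y" and nt: "\<psi> 1 \<noteq> 1"
  shows "(\<Sum>y\<in>UNIV. \<psi> y) = 0"
proof -
  define T where "T = (\<Sum>y\<in>UNIV. \<psi> y)"
  have "(\<Sum>y\<in>UNIV. \<psi> (y + 1)) = T" unfolding T_def
    by (rule sum.reindex_bij_witness[of _ "\<lambda>y. y - 1" "\<lambda>y. y + 1"]) auto
  hence "T * \<psi> 1 = T" by (simp add: hom sum_distrib_right T_def)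
  hence "T * (\<psi> 1 - 1) = 0" by (simp add: algebra_simps)
  thus ?thesis using nt by (simp add: T_def)
qed

lemma orth:
  fixes \<psi> :: "'a::{field,finite} \<Rightarrow> complex"
  assumes hom: "\<And>x y. \<psi> (x + y) = \<psi> x * \<psi> y" and nrm: "\<And>x. norm (\<psi> x) = 1" and nt: "\<psi> 1 \<noteq> 1"
  shows "(\<Sum>b\<in>UNIV. \<psi> (b * x)) = (if x = 0 then of_nat CARD('a) else 0)"
proof (cases "x = 0")
  case True thus ?thesis by (simp add: psi0[OF hom nrm])
next
  case False
  have "(\<Sum>b\<in>UNIV. \<psi> (b * x)) = (\<Sum>y\<in>UNIV. \<psi> y)"
    by (rule sum.reindex_bij_witness[of _ "\<lambda>y. y / x" "\<lambda>b. b * x"]) (use False in auto)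
  thus ?thesis using sum_psi_zero[OF hom nt] False by simp
qed

lemma gauss_bound:
  fixes \<psi> :: "'a::{field,finite} \<Rightarrow> complex" and H :: "'a set"
  assumes hom: "\<And>x y. \<psi> (x + y) = \<psi> x * \<psi> y" and nrm: "\<And>x. norm (\<psi> x) = 1" and nt: "\<psi> 1 \<noteq> 1"
    and H_sub: "H \<subseteq> UNIV - {0}" and H_one: "1 \<in> H"
    and H_mult: "\<And>x y. x \<in> H \<Longrightarrow> y \<in> H \<Longrightarrow> x * y \<in> H"
    and H_inv: "\<And>x. x \<in> H \<Longrightarrow> inverse x \<in> H"
    and c: "c \<noteq> 0"
  shows "norm (\<Sum>a\<in>H. \<psi> (c * a)) \<le> sqrt (real CARD('a))"
proof -
  define S where "S d = (\<Sum>a\<in>H. \<psi> (d * a))" for d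
  define q where "q = CARD('a)"
  define n where "n = card H"
  have npos: "n > 0" using H_one unfolding n_def by (auto simp: card_gt_0_iff)
  have Sabs: "complex_of_real (norm (S d) ^ 2) = (\<Sum>a\<in>H. \<Sum>a'\<in>H. \<psi> (d * (a - a')))" for d
  proof -
    have "complex_of_real (norm (S d) ^ 2) = S d * cnj (S d)" by (metis complex_norm_square of_real_power)
    also have "\<dots> = (\<Sum>a\<in>H. \<psi> (d * a)) * (\<Sum>a'\<in>H. \<psi> (- (d * a')))"
      by (simp add: S_def psi_cnj[OF hom nrm])
    also have "\<dots> = (\<Sum>a\<in>H. \<Sum>a'\<in>H. \<psi> (d * a) * \<psi> (- (d * a')))" by (rule sum_product)
    also have "\<dots> = (\<Sum>a\<in>H. \<Sum>a'\<in>H. \<psi> (d * (a - a')))"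
      by (intro sum.cong refl) (simp add: hom[symmetric] right_diff_distrib)
    finally show ?thesis .
  qed
  have tot: "(\<Sum>d\<in>UNIV. norm (S d) ^ 2) = real q * real n"
  proof -
    have "complex_of_real (\<Sum>d\<in>UNIV. norm (S d) ^ 2) = (\<Sum>d\<in>UNIV. \<Sum>a\<in>H. \<Sum>a'\<in>H. \<psi> (d * (a - a')))"
      by (simp only: of_real_sum Sabs)
    also have "\<dots> = (\<Sum>a\<in>H. \<Sum>d\<in>UNIV. \<Sum>a'\<in>H. \<psi> (d * (a - a')))"
      by (rule sum.swap)
    also have "\<dots> = (\<Sum>a\<in>H. \<Sum>a'\<in>H. \<Sum>d\<in>UNIV. \<psi> (d * (a - a')))"
      by (rule sum.cong[OF refl], rule sum.swap)
    also have "\<dots> = (\<Sum>a\<in>H. \<Sum>a'\<in>H. if a = a' then of_nat q else 0)"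
      by (simp add: orth[OF hom nrm nt] q_def)
    also have "\<dots> = (\<Sum>a\<in>H. of_nat q)" by (simp add: sum.delta sum.delta')
    also have "\<dots> = complex_of_real (real q * real n)" by (simp add: n_def)
    finally show ?thesis using of_real_eq_iff by blast
  qed
  have Sinv: "S (c * h) = S c" if h: "h \<in> H" for h
  proof -
    have h0: "h \<noteq> 0" using h H_sub by auto
    show ?thesis unfolding S_def
      by (rule sum.reindex_bij_witness[of _ "\<lambda>a. inverse h * a" "\<lambda>a. h * a"])
         (use h h0 H_mult H_inv in \<open>auto simp: mult.assoc\<close>)
  qed
  have "real n * norm (S c) ^ 2 = (\<Sum>h\<in>H. norm (S (c * h)) ^ 2)"
    by (simp add: Sinv n_def)
  also have "\<dots> = (\<Sum>d\<in>(\<lambda>h. c * h) ` H. norm (S d) ^ 2)"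
    by (rule sum.reindex[symmetric, unfolded comp_def]) (use c in \<open>auto intro: inj_onI\<close>)
  also have "\<dots> \<le> (\<Sum>d\<in>UNIV. norm (S d) ^ 2)"
    by (rule sum_mono2) auto
  also have "\<dots> = real q * real n" by (rule tot)
  finally have "real n * norm (S c) ^ 2 \<le> real n * real q" by (simp add: mult.commute)
  hence "norm (S c) ^ 2 \<le> real q" using npos by simp
  hence "norm (S c) \<le> sqrt (real q)" by (rule real_le_rsqrt)
  thus ?thesis by (simp add: S_def q_def)
qed


theorem mainTheorem11:
  fixes H :: "'a::{field, finite} set" and m k :: nat
  assumes m_pos: "m > 0"
    and m_dvd: "m dvd (CARD('a) - 1)"
    and H_sub: "H \<subseteq> UNIV - {0}"
    and H_one: "1 \<in> H"
    and H_mult: "\<And>x y. x \<in> H \<Longrightarrow> y \<in> H \<Longrightarrow> x * y \<in> H"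
    and H_inv: "\<And>x. x \<in> H \<Longrightarrow> inverse x \<in> H"
    and H_index: "m * card H = CARD('a) - 1"
    and k_ge: "1 \<le> k" and k_le: "k \<le> (CARD('a) - 1) div m"
  shows "\<bar>real (subset_sum_count H k 0)
            - (1 / real CARD('a)) * real (((CARD('a) - 1) div m) choose k)\<bar>
         \<le> (sqrt (real CARD('a)) + real k - 1
              + real CARD('a) / (real m * real CHAR('a))) gchoose k"
proof -
  obtain \<psi> :: "'a \<Rightarrow> complex" where hom: "\<And>x y. \<psi> (x + y) = \<psi> x * \<psi> y"
    and nrm: "\<And>x. norm (\<psi> x) = 1" and nt: "\<psi> 1 \<noteq> 1"
    using exists_add_char by blast
  define q where "q = CARD('a)"
  define n where "n = card H"
  define p where "p = CHAR('a)"
  define s where "s = sqrt (real q)"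
  define t where "t = max 0 (real n - s)"
  define c where "c = s + t / real p"
  have finH: "finite H" by (rule finite_subset[of _ UNIV]) auto
  have p1: "p \<ge> 1" using char_pos[where 'a='a] unfolding p_def by simp
  have q1: "q \<ge> 1" unfolding q_def using card_gt_0_iff[of "UNIV :: 'a set"] by simp
  have s1: "s \<ge> 1" unfolding s_def using q1 by simp
  have t0: "t \<ge> 0" unfolding t_def by simp
  have c1: "c \<ge> 1" unfolding c_def using s1 t0 by (simp add: add_increasing2)
  have nm: "n * m = q - 1" using H_index by (simp add: n_def q_def mult.commute)
  have ndiv: "(q - 1) div m = n" using nm m_pos by (metis nonzero_mult_div_cancel_right not_gr0)
  have Eb: "norm (esym (\<lambda>a. \<psi> (b * a)) H k) \<le> Fc c k" if bnz: "b \<noteq> 0" for b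
  proof (rule esym_bound[OF finH, where U = "\<lambda>j. s + t * (if p dvd j then 1 else 0)"])
    show "1 \<le> Fc c 0" by simp
  next
    fix j :: nat assume "j \<ge> 1"
    show "norm (psum (\<lambda>a. \<psi> (b * a)) H j) \<le> s + t * (if p dvd j then 1 else 0)"
    proof (cases "p dvd j")
      case True
      hence j0: "(of_nat j :: 'a) = 0" by (simp add: p_def of_nat_eq_0_iff_char_dvd)
      have "psum (\<lambda>a. \<psi> (b * a)) H j = (\<Sum>a\<in>H. \<psi> (of_nat j * (b * a)))"
        by (simp add: psum_def psi_pow[OF hom nrm])
      also have "\<dots> = of_nat n" by (simp add: j0 psi0[OF hom nrm] n_def)
      finally have "norm (psum (\<lambda>a. \<psi> (b * a)) H j) = real n" by simp
      also have "real n \<le> s + t" by (simp add: t_def)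
      finally show ?thesis using True by simp
    next
      case False
      hence j0: "(of_nat j :: 'a) \<noteq> 0" by (simp add: p_def of_nat_eq_0_iff_char_dvd)
      have jb: "(of_nat j :: 'a) * b \<noteq> 0" using j0 bnz by simp
      have "psum (\<lambda>a. \<psi> (b * a)) H j = (\<Sum>a\<in>H. \<psi> ((of_nat j * b) * a))"
        by (simp add: psum_def psi_pow[OF hom nrm] mult.assoc)
      also have "norm \<dots> \<le> s" unfolding s_def q_def
        by (rule gauss_bound[OF hom nrm nt H_sub H_one H_mult H_inv jb])
      finally show ?thesis using False by simp
    qed
  next
    fix k' :: nat assume "k' \<ge> 1"
    show "(\<Sum>i<k'. Fc c i * (s + t * (if p dvd (k' - i) then 1 else 0))) \<le> of_nat k' * Fc c k'"
      by (rule FU_ineq) (use s1 t0 p1 c1 in \<open>auto simp: c_def\<close>)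
  qed
  define Sk where "Sk = {S. S \<subseteq> H \<and> card S = k}"
  have finSk: "finite Sk" unfolding Sk_def by (rule finite_subset[of _ "Pow H"]) (auto simp: finH)
  have cnt: "complex_of_nat (subset_sum_count H k 0) = (\<Sum>S\<in>Sk. if (\<Sum>a\<in>S. a) = 0 then 1 else 0)"
  proof -
    have "{S. S \<subseteq> H \<and> card S = k \<and> (\<Sum>a\<in>S. a) = 0} = {S\<in>Sk. (\<Sum>a\<in>S. a) = 0}"
      by (auto simp: Sk_def)
    thus ?thesis unfolding subset_sum_count_def by (simp add: sum.inter_filter[OF finSk, symmetric])
  qed
  have qpos: "(of_nat q :: complex) \<noteq> 0" using q1 by simp
  have ind: "(if (\<Sum>a\<in>S. a) = 0 then 1 else 0) = (1 / of_nat q) * (\<Sum>b\<in>UNIV. \<psi> (b * (\<Sum>a\<in>S. a)))"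
    for S :: "'a set"
    using qpos by (simp add: orth[OF hom nrm nt] q_def)
  have prodform: "\<psi> (b * (\<Sum>a\<in>S. a)) = (\<Prod>a\<in>S. \<psi> (b * a))" if "S \<in> Sk" for S b
  proof -
    have "finite S" using that finH unfolding Sk_def by (auto intro: finite_subset)
    thus ?thesis by (simp add: sum_distrib_left psi_sum[OF hom nrm])
  qed
  define E where "E b = esym (\<lambda>a. \<psi> (b * a)) H k" for b
  have "complex_of_nat (subset_sum_count H k 0) = (\<Sum>S\<in>Sk. (1 / of_nat q) * (\<Sum>b\<in>UNIV. \<Prod>a\<in>S. \<psi> (b * a)))"
    unfolding cnt ind by (intro sum.cong refl) (simp add: prodform)
  also have "\<dots> = (1 / of_nat q) * (\<Sum>b\<in>UNIV. E b)"
    unfolding E_def esym_def Sk_def[symmetric] by (simp add: sum_distrib_left sum.swap[of _ Sk])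
  also have "(\<Sum>b\<in>UNIV. E b) = E 0 + (\<Sum>b\<in>UNIV - {0}. E b)"
    by (rule sum.remove) auto
  also have "E 0 = of_nat (n choose k)"
  proof -
    have "E 0 = (\<Sum>S\<in>Sk. 1)"
      unfolding E_def esym_def Sk_def[symmetric] by (simp add: psi0[OF hom nrm])
    also have "\<dots> = of_nat (card Sk)" by simp
    also have "card Sk = n choose k" unfolding Sk_def n_def by (rule n_subsets[OF finH])
    finally show ?thesis .
  qed
  finally have eqM: "complex_of_nat (subset_sum_count H k 0) - of_nat (n choose k) / of_nat q
      = (1 / of_nat q) * (\<Sum>b\<in>UNIV - {0}. E b)"
    by (simp add: algebra_simps)
  define X where "X = real (subset_sum_count H k 0) - (1 / real q) * real (n choose k)"
  have "complex_of_real X = complex_of_nat (subset_sum_count H k 0) - of_nat (n choose k) / of_nat q"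
    by (simp add: X_def)
  hence "\<bar>X\<bar> = norm ((1 / of_nat q) * (\<Sum>b\<in>UNIV - {0}. E b))"
    using eqM by (metis norm_of_real)
  also have "\<dots> = (1 / real q) * norm (\<Sum>b\<in>UNIV - {0}. E b)"
    by (simp add: norm_mult norm_divide)
  also have "\<dots> \<le> (1 / real q) * (\<Sum>b\<in>(UNIV::'a set) - {0}. Fc c k)"
  proof (rule mult_left_mono)
    have "norm (\<Sum>b\<in>UNIV - {0}. E b) \<le> (\<Sum>b\<in>UNIV - {0}. norm (E b))" by (rule norm_sum)
    also have "\<dots> \<le> (\<Sum>b\<in>(UNIV::'a set) - {0}. Fc c k)" using Eb unfolding E_def by (intro sum_mono) auto
    finally show "norm (\<Sum>b\<in>UNIV - {0}. E b) \<le> (\<Sum>b\<in>(UNIV::'a set) - {0}. Fc c k)" .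
  qed simp
  also have "\<dots> = (real (q - 1) / real q) * Fc c k"
    by (simp add: card_Diff_singleton q_def)
  also have "\<dots> \<le> 1 * Fc c k"
  proof (rule mult_right_mono)
    show "real (q - 1) / real q \<le> 1" using q1 by simp
    show "0 \<le> Fc c k" using c1 by (simp add: Fc_nonneg)
  qed
  also have "\<dots> = (c + real k - 1) gchoose k" by (simp add: Fc_gchoose)
  also have "\<dots> \<le> (s + real k - 1 + real q / (real m * real p)) gchoose k"
  proof (rule gchoose_mono)
    show "real k - 1 \<le> c + real k - 1" using c1 by simp
    have "t \<le> real n" unfolding t_def using s1 by simp
    also have "real n \<le> real q / real m"
    proof -
      have "real n * real m = real q - 1" using nm q1 by (metis of_nat_1 of_nat_diff of_nat_mult)
      thus ?thesis using m_pos by (simp add: field_simps)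
    qed
    finally have tq: "t \<le> real q / real m" .
    have "t / real p \<le> (real q / real m) / real p" by (rule divide_right_mono[OF tq]) simp
    hence "t / real p \<le> real q / (real m * real p)" by (simp add: divide_divide_eq_left)
    thus "c + real k - 1 \<le> s + real k - 1 + real q / (real m * real p)"
      unfolding c_def by (simp add: field_simps)
  qed
  finally show ?thesis unfolding X_def q_def[symmetric] p_def[symmetric] s_def[symmetric] ndiv .
qed

end
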